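(* The Lie algebras $\mathfrak h(1)$, $\mathfrak g_{4,1}$, $\mathfrak g_{5,2}$, $\mathfrak g_{6,4}$, $\mathfrak g_{6,5}$ are admissible.
   Context: Lie algebras are given by a basis and brackets; brackets of basis vectors not listed vanish. $\mathfrak h(1)=\{[X_1,X_2]=Y\}$, $\mathfrak g_{4,1}=\{[X_1,Z]=Y,[X_1,X_2]=Z\}$, $\mathfrak g_{5,2}=\{[X_1,X_2]=Y,[X_1,X_3]=Z\}$, $\mathfrak g_{6,4}=\{[X_1,X_2]=Y,[X_1,X_3]=Z,[X_3,X_4]=Y\}$, $\mathfrak g_{6,5}=\{[X_1,X_2]=Y,[X_1,X_3]=Z,[X_2,X_4]=Z,[X_3,X_4]=-Y\}$ (real Lie algebras). For a Lie algebra $\mathfrak l$: $\mathfrak l^1=\mathfrak l$, $\mathfrak l^{k+1}=[\mathfrak l,\mathfrak l^k]$, $\mathfrak z(\mathfrak l)$ the centre. An orthogonal $\mathfrak l$-module $(\rho,\mathfrak a)$ is a finite-dimensional real vector space with a nondegenerate symmetric bilinear form $\langle\cdot,\cdot\rangle_{\mathfrak a}$ and a representation by skew-adjoint maps. $C^p(\mathfrak l,\mathfrak a)$: alternating $p$-linear maps with Chevalley–Eilenberg differential $d$; $C^p(\mathfrak l)=C^p(\mathfrak l,\mathbb R)$. $\langle\alpha\wedge\beta\rangle\in C^{p+q}(\mathfrak l)$ is the wedge product followed by contraction with $\langle\cdot,\cdot\rangle_{\mathfrak a}$. $\mathcal Z^2_Q(\mathfrak l,\mathfrak a)=\{(\alpha,\gamma)\in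 C^2(\mathfrak l,\mathfrak a)\oplus C^3(\mathfrak l): d\alpha=0, d\gamma=\frac12\langle\alpha\wedge\alpha\rangle\}$; the group $C^1(\mathfrak l,\mathfrak a)\oplus C^2(\mathfrak l)$ with $(\tau_1,\sigma_1)*(\tau_2,\sigma_2)=(\tau_1+\tau_2,\sigma_1+\sigma_2+\frac12\langle\tau_1\wedge\tau_2\rangle)$ acts by $(\alpha,\gamma)(\tau,\sigma)=(\alpha+d\tau,\gamma+d\sigma+\langle(\alpha+\frac12d\tau)\wedge\tau\rangle)$; the orbit set is $\mathcal H^2_Q(\mathfrak l,\mathfrak a)$. Admissibility (for nilpotent $\mathfrak l$ and semisimple orthogonal $(\rho,\mathfrak a)$): let $\mathfrak l^{m+2}=0$, $\mathfrak l_{(0)}=\mathfrak z(\mathfrak l)\cap\ker\rho$, $\mathfrak l_{(k)}=\mathfrak z(\mathfrak l)\cap\mathfrak l^{k+1}$ for $k\ge1$; represent the class by $(\alpha,\gamma)$ with $\alpha(\mathfrak l,\mathfrak l)\subset\mathfrak a^{\mathfrak l}$. It is admissible iff for $0\le k\le m$: $(A_k)$ if $L_0\in\mathfrak l_{(k)}$ and there are $A_0\in\mathfrak a$, $Z_0\in(\mathfrak l^{k+1})^*$ with $\alpha(L,L_0)=0$ and $\gamma(L,L_0,\cdot)=-\langle A_0,\alpha(L,\cdot)\rangle_{\mathfrak a}+\langle Z_0,[L,\cdot]\rangle$ on $\mathfrak l^{k+1}$ for all $L\in\mathfrak l$, then $L_0=0$; $(B_k)$ $\alpha(\ker(\mathfrak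 l\otimes\mathfrak l^{k+1}\xrightarrow{[\cdot,\cdot]}\mathfrak l))\subset\mathfrak a$ is nondegenerate. $\mathfrak l$ is admissible if for some semisimple orthogonal module $\mathfrak a$ an admissible class in $\mathcal H^2_Q(\mathfrak l,\mathfrak a)$ exists. *)

theory Defs
  imports "HOL-Analysis.Analysis" "HOL-Library.Function_Algebras"
begin

text \<open>Used only as an ambient space in which every finite-dimensional real
vector space (the module a) can be realised as a subspace.\<close>

instantiation "fun" :: (type, real_vector) real_vector
begin
definition scaleR_fun :: "real \<Rightarrow> ('a \<Rightarrow> 'b) \<Rightarrow> 'a \<Rightarrow> 'b"
  where "scaleR_fun c f = (\<lambda>x. c *\<^sub>R f x)"
instance
  by standard (simp_all add: scaleR_fun_def fun_eq_iff plus_fun_def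
      scaleR_add_right scaleR_add_left)
end

text \<open>The Lie algebra l is the whole (finite-dimensional) type 'v with bracket br.\<close>

text \<open>Lower central series: lcs br (Suc 0) = l, lcs br (Suc (Suc k)) = [l, l^(k+1)].\<close>
fun lcs :: "('v::real_vector \<Rightarrow> 'v \<Rightarrow> 'v) \<Rightarrow> nat \<Rightarrow> 'v set" where
  "lcs br 0 = UNIV"
| "lcs br (Suc 0) = UNIV"
| "lcs br (Suc (Suc k)) = span {br x y | x y. y \<in> lcs br (Suc k)}"

definition centre :: "('v \<Rightarrow> 'v \<Rightarrow> 'v::real_vector) \<Rightarrow> 'v set" where
  "centre br = {z. \<forall>x. br x z = 0}"

definition bilinear_map :: "('v::real_vector \<Rightarrow> 'v \<Rightarrow> 'w::real_vector) \<Rightarrow> bool" where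
  "bilinear_map f \<longleftrightarrow> (\<forall>x. linear (f x)) \<and> (\<forall>y. linear (\<lambda>x. f x y))"

definition trilinear_map :: "('v::real_vector \<Rightarrow> 'v \<Rightarrow> 'v \<Rightarrow> 'w::real_vector) \<Rightarrow> bool" where
  "trilinear_map f \<longleftrightarrow> (\<forall>x y. linear (f x y)) \<and> (\<forall>x z. linear (\<lambda>y. f x y z))
      \<and> (\<forall>y z. linear (\<lambda>x. f x y z))"

definition linear_on :: "'w::real_vector set \<Rightarrow> ('w \<Rightarrow> 'u::real_vector) \<Rightarrow> bool" where
  "linear_on S f \<longleftrightarrow> (\<forall>u\<in>S. \<forall>v\<in>S. f (u + v) = f u + f v) \<and> (\<forall>c. \<forall>u\<in>S. f (c *\<^sub>R u) = c *\<^sub>R f u)"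

definition fin_dim_subspace :: "'w::real_vector set \<Rightarrow> bool" where
  "fin_dim_subspace A \<longleftrightarrow> subspace A \<and> (\<exists>S. finite S \<and> A = span S)"

definition is_rep :: "('v::real_vector \<Rightarrow> 'v \<Rightarrow> 'v) \<Rightarrow> 'w::real_vector set \<Rightarrow> ('v \<Rightarrow> 'w \<Rightarrow> 'w) \<Rightarrow> bool" where
  "is_rep br A \<rho> \<longleftrightarrow>
     (\<forall>x. \<forall>u\<in>A. \<rho> x u \<in> A)
   \<and> (\<forall>x. linear_on A (\<rho> x))
   \<and> (\<forall>u\<in>A. linear (\<lambda>x. \<rho> x u))
   \<and> (\<forall>x y. \<forall>u\<in>A. \<rho> (br x y) u = \<rho> x (\<rho> y u) - \<rho> y (\<rho> x u))"

definition nondeg_sym_form :: "'w::real_vector set \<Rightarrow> ('w \<Rightarrow> 'w \<Rightarrow> real) \<Rightarrow> bool" where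
  "nondeg_sym_form A B \<longleftrightarrow>
     (\<forall>u\<in>A. linear_on A (B u))
   \<and> (\<forall>u\<in>A. \<forall>v\<in>A. B u v = B v u)
   \<and> (\<forall>u\<in>A. (\<forall>v\<in>A. B u v = 0) \<longrightarrow> u = 0)"

definition orthogonal_module ::
  "('v::real_vector \<Rightarrow> 'v \<Rightarrow> 'v) \<Rightarrow> 'w::real_vector set \<Rightarrow> ('v \<Rightarrow> 'w \<Rightarrow> 'w) \<Rightarrow> ('w \<Rightarrow> 'w \<Rightarrow> real) \<Rightarrow> bool" where
  "orthogonal_module br A \<rho> B \<longleftrightarrow>
     fin_dim_subspace A \<and> is_rep br A \<rho> \<and> nondeg_sym_form A B
   \<and> (\<forall>x. \<forall>u\<in>A. \<forall>v\<in>A. B (\<rho> x u) v = - B u (\<rho> x v))"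

definition invariant_subspace :: "'w::real_vector set \<Rightarrow> ('v \<Rightarrow> 'w \<Rightarrow> 'w) \<Rightarrow> 'w set \<Rightarrow> bool" where
  "invariant_subspace A \<rho> U \<longleftrightarrow> subspace U \<and> U \<subseteq> A \<and> (\<forall>x. \<forall>u\<in>U. \<rho> x u \<in> U)"

definition semisimple_rep :: "'w::real_vector set \<Rightarrow> ('v \<Rightarrow> 'w \<Rightarrow> 'w) \<Rightarrow> bool" where
  "semisimple_rep A \<rho> \<longleftrightarrow>
     (\<forall>U. invariant_subspace A \<rho> U \<longrightarrow>
        (\<exists>W. invariant_subspace A \<rho> W \<and> U \<inter> W = {0} \<and> {u + w | u w. u \<in> U \<and> w \<in> W} = A))"

definition invariants :: "'w set \<Rightarrow> ('v \<Rightarrow> 'w \<Rightarrow> 'w::real_vector) \<Rightarrow> 'w set" where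
  "invariants A \<rho> = {a \<in> A. \<forall>x. \<rho> x a = 0}"

definition ker_rep :: "'w set \<Rightarrow> ('v \<Rightarrow> 'w \<Rightarrow> 'w::real_vector) \<Rightarrow> 'v set" where
  "ker_rep A \<rho> = {x. \<forall>u\<in>A. \<rho> x u = 0}"

definition C1 :: "'w set \<Rightarrow> ('v::real_vector \<Rightarrow> 'w::real_vector) set" where
  "C1 A = {\<tau>. linear \<tau> \<and> (\<forall>x. \<tau> x \<in> A)}"

definition C2 :: "'w set \<Rightarrow> ('v::real_vector \<Rightarrow> 'v \<Rightarrow> 'w::real_vector) set" where
  "C2 A = {\<alpha>. bilinear_map \<alpha> \<and> (\<forall>x. \<alpha> x x = 0) \<and> (\<forall>x y. \<alpha> x y \<in> A)}"

definition C2s :: "('v::real_vector \<Rightarrow> 'v \<Rightarrow> real) set" where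
  "C2s = {\<sigma>. bilinear_map \<sigma> \<and> (\<forall>x. \<sigma> x x = 0)}"

definition C3s :: "('v::real_vector \<Rightarrow> 'v \<Rightarrow> 'v \<Rightarrow> real) set" where
  "C3s = {\<gamma>. trilinear_map \<gamma> \<and> (\<forall>x y. \<gamma> x x y = 0 \<and> \<gamma> x y y = 0 \<and> \<gamma> x y x = 0)}"

definition d1 :: "('v \<Rightarrow> 'v \<Rightarrow> 'v) \<Rightarrow> ('v \<Rightarrow> 'w \<Rightarrow> 'w::real_vector) \<Rightarrow> ('v \<Rightarrow> 'w) \<Rightarrow> 'v \<Rightarrow> 'v \<Rightarrow> 'w" where
  "d1 br \<rho> \<tau> x y = \<rho> x (\<tau> y) - \<rho> y (\<tau> x) - \<tau> (br x y)"

definition d2 :: "('v \<Rightarrow> 'v \<Rightarrow> 'v) \<Rightarrow> ('v \<Rightarrow> 'w \<Rightarrow> 'w::real_vector) \<Rightarrow> ('v \<Rightarrow> 'v \<Rightarrow> 'w) \<Rightarrow> 'v \<Rightarrow> 'v \<Rightarrow> 'v \<Rightarrow> 'w" where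
  "d2 br \<rho> \<alpha> x y z = \<rho> x (\<alpha> y z) - \<rho> y (\<alpha> x z) + \<rho> z (\<alpha> x y)
      - \<alpha> (br x y) z + \<alpha> (br x z) y - \<alpha> (br y z) x"

definition d2s :: "('v \<Rightarrow> 'v \<Rightarrow> 'v) \<Rightarrow> ('v \<Rightarrow> 'v \<Rightarrow> real) \<Rightarrow> 'v \<Rightarrow> 'v \<Rightarrow> 'v \<Rightarrow> real" where
  "d2s br \<sigma> x y z = - \<sigma> (br x y) z + \<sigma> (br x z) y - \<sigma> (br y z) x"

definition d3s :: "('v \<Rightarrow> 'v \<Rightarrow> 'v) \<Rightarrow> ('v \<Rightarrow> 'v \<Rightarrow> 'v \<Rightarrow> real) \<Rightarrow> 'v \<Rightarrow> 'v \<Rightarrow> 'v \<Rightarrow> 'v \<Rightarrow> real" where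
  "d3s br \<gamma> w x y z = - \<gamma> (br w x) y z + \<gamma> (br w y) x z - \<gamma> (br w z) x y
      - \<gamma> (br x y) w z + \<gamma> (br x z) w y - \<gamma> (br y z) w x"

text \<open>Contracted wedge products (shuffle convention).\<close>
definition wedge11 :: "('w \<Rightarrow> 'w \<Rightarrow> real) \<Rightarrow> ('v \<Rightarrow> 'w) \<Rightarrow> ('v \<Rightarrow> 'w) \<Rightarrow> 'v \<Rightarrow> 'v \<Rightarrow> real" where
  "wedge11 B \<tau>1 \<tau>2 x y = B (\<tau>1 x) (\<tau>2 y) - B (\<tau>1 y) (\<tau>2 x)"

definition wedge21 :: "('w \<Rightarrow> 'w \<Rightarrow> real) \<Rightarrow> ('v \<Rightarrow> 'v \<Rightarrow> 'w) \<Rightarrow> ('v \<Rightarrow> 'w) \<Rightarrow> 'v \<Rightarrow> 'v \<Rightarrow> 'v \<Rightarrow> real" where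
  "wedge21 B \<beta> \<tau> x y z = B (\<beta> x y) (\<tau> z) - B (\<beta> x z) (\<tau> y) + B (\<beta> y z) (\<tau> x)"

definition wedge22 :: "('w \<Rightarrow> 'w \<Rightarrow> real) \<Rightarrow> ('v \<Rightarrow> 'v \<Rightarrow> 'w) \<Rightarrow> ('v \<Rightarrow> 'v \<Rightarrow> 'w) \<Rightarrow> 'v \<Rightarrow> 'v \<Rightarrow> 'v \<Rightarrow> 'v \<Rightarrow> real" where
  "wedge22 B \<alpha> \<beta> w x y z =
      B (\<alpha> w x) (\<beta> y z) - B (\<alpha> w y) (\<beta> x z) + B (\<alpha> w z) (\<beta> x y)
    + B (\<alpha> x y) (\<beta> w z) - B (\<alpha> x z) (\<beta> w y) + B (\<alpha> y z) (\<beta> w x)"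

definition Z2Q :: "('v::real_vector \<Rightarrow> 'v \<Rightarrow> 'v) \<Rightarrow> 'w::real_vector set \<Rightarrow> ('v \<Rightarrow> 'w \<Rightarrow> 'w) \<Rightarrow> ('w \<Rightarrow> 'w \<Rightarrow> real)
     \<Rightarrow> (('v \<Rightarrow> 'v \<Rightarrow> 'w) \<times> ('v \<Rightarrow> 'v \<Rightarrow> 'v \<Rightarrow> real)) set" where
  "Z2Q br A \<rho> B = {(\<alpha>, \<gamma>). \<alpha> \<in> C2 A \<and> \<gamma> \<in> C3s
      \<and> (\<forall>x y z. d2 br \<rho> \<alpha> x y z = 0)
      \<and> (\<forall>w x y z. d3s br \<gamma> w x y z = (1/2) * wedge22 B \<alpha> \<alpha> w x y z)}"

definition qact :: "('v \<Rightarrow> 'v \<Rightarrow> 'v) \<Rightarrow> ('v \<Rightarrow> 'w \<Rightarrow> 'w::real_vector) \<Rightarrow> ('w \<Rightarrow> 'w \<Rightarrow> real)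
     \<Rightarrow> ('v \<Rightarrow> 'v \<Rightarrow> 'w) \<times> ('v \<Rightarrow> 'v \<Rightarrow> 'v \<Rightarrow> real) \<Rightarrow> ('v \<Rightarrow> 'w) \<times> ('v \<Rightarrow> 'v \<Rightarrow> real)
     \<Rightarrow> ('v \<Rightarrow> 'v \<Rightarrow> 'w) \<times> ('v \<Rightarrow> 'v \<Rightarrow> 'v \<Rightarrow> real)" where
  "qact br \<rho> B p g =
     (case p of (\<alpha>, \<gamma>) \<Rightarrow> case g of (\<tau>, \<sigma>) \<Rightarrow>
       (\<lambda>x y. \<alpha> x y + d1 br \<rho> \<tau> x y,
        \<lambda>x y z. \<gamma> x y z + d2s br \<sigma> x y z
           + wedge21 B (\<lambda>u v. \<alpha> u v + (1/2) *\<^sub>R d1 br \<rho> \<tau> u v) \<tau> x y z))"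

definition H2Q :: "('v::real_vector \<Rightarrow> 'v \<Rightarrow> 'v) \<Rightarrow> 'w::real_vector set \<Rightarrow> ('v \<Rightarrow> 'w \<Rightarrow> 'w) \<Rightarrow> ('w \<Rightarrow> 'w \<Rightarrow> real)
     \<Rightarrow> (('v \<Rightarrow> 'v \<Rightarrow> 'w) \<times> ('v \<Rightarrow> 'v \<Rightarrow> 'v \<Rightarrow> real)) set set" where
  "H2Q br A \<rho> B = {qact br \<rho> B p ` (C1 A \<times> C2s) | p. p \<in> Z2Q br A \<rho> B}"

definition lk :: "('v::real_vector \<Rightarrow> 'v \<Rightarrow> 'v) \<Rightarrow> 'w::real_vector set \<Rightarrow> ('v \<Rightarrow> 'w \<Rightarrow> 'w) \<Rightarrow> nat \<Rightarrow> 'v set" where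
  "lk br A \<rho> k = (if k = 0 then centre br \<inter> ker_rep A \<rho> else centre br \<inter> lcs br (Suc k))"

definition cond_A :: "('v::real_vector \<Rightarrow> 'v \<Rightarrow> 'v) \<Rightarrow> 'w::real_vector set \<Rightarrow> ('v \<Rightarrow> 'w \<Rightarrow> 'w) \<Rightarrow> ('w \<Rightarrow> 'w \<Rightarrow> real)
     \<Rightarrow> ('v \<Rightarrow> 'v \<Rightarrow> 'w) \<Rightarrow> ('v \<Rightarrow> 'v \<Rightarrow> 'v \<Rightarrow> real) \<Rightarrow> nat \<Rightarrow> bool" where
  "cond_A br A \<rho> B \<alpha> \<gamma> k \<longleftrightarrow>
     (\<forall>L0 \<in> lk br A \<rho> k.
        (\<exists>A0 \<in> A. \<exists>Z0 :: 'v \<Rightarrow> real. linear_on (lcs br (Suc k)) Z0 \<and>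
           (\<forall>L. \<alpha> L L0 = 0 \<and>
              (\<forall>X \<in> lcs br (Suc k). \<gamma> L L0 X = - B A0 (\<alpha> L X) + Z0 (br L X))))
        \<longrightarrow> L0 = 0)"

text \<open>Image under alpha of the kernel of l (x) l^(k+1) -> l, written out via finite sums of
  elementary tensors.\<close>
definition alpha_ker_image :: "('v::real_vector \<Rightarrow> 'v \<Rightarrow> 'v) \<Rightarrow> ('v \<Rightarrow> 'v \<Rightarrow> 'w::real_vector) \<Rightarrow> nat \<Rightarrow> 'w set" where
  "alpha_ker_image br \<alpha> k =
     {(\<Sum>i<N. \<alpha> (x i) (y i)) | (N::nat) x y.
        (\<forall>i<N. y i \<in> lcs br (Suc k)) \<and> (\<Sum>i<N. br (x i) (y i)) = 0}"

definition nondegenerate_sub :: "('w \<Rightarrow> 'w \<Rightarrow> real) \<Rightarrow> 'w::real_vector set \<Rightarrow> bool" where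
  "nondegenerate_sub B S \<longleftrightarrow> (\<forall>u\<in>S. (\<forall>v\<in>S. B u v = 0) \<longrightarrow> u = 0)"

definition cond_B :: "('v::real_vector \<Rightarrow> 'v \<Rightarrow> 'v) \<Rightarrow> ('w \<Rightarrow> 'w \<Rightarrow> real) \<Rightarrow> ('v \<Rightarrow> 'v \<Rightarrow> 'w::real_vector) \<Rightarrow> nat \<Rightarrow> bool" where
  "cond_B br B \<alpha> k \<longleftrightarrow> nondegenerate_sub B (alpha_ker_image br \<alpha> k)"

definition nil_m :: "('v::real_vector \<Rightarrow> 'v \<Rightarrow> 'v) \<Rightarrow> nat" where
  "nil_m br = (LEAST m. lcs br (m + 2) = {0})"

definition admissible_class :: "('v::real_vector \<Rightarrow> 'v \<Rightarrow> 'v) \<Rightarrow> 'w::real_vector set \<Rightarrow> ('v \<Rightarrow> 'w \<Rightarrow> 'w) \<Rightarrow> ('w \<Rightarrow> 'w \<Rightarrow> real)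
     \<Rightarrow> (('v \<Rightarrow> 'v \<Rightarrow> 'w) \<times> ('v \<Rightarrow> 'v \<Rightarrow> 'v \<Rightarrow> real)) set \<Rightarrow> bool" where
  "admissible_class br A \<rho> B c \<longleftrightarrow>
     (\<exists>\<alpha> \<gamma>. (\<alpha>, \<gamma>) \<in> c \<and> (\<forall>x y. \<alpha> x y \<in> invariants A \<rho>)
        \<and> (\<forall>k \<le> nil_m br. cond_A br A \<rho> B \<alpha> \<gamma> k \<and> cond_B br B \<alpha> k))"

text \<open>Every finite-dimensional real vector space is isomorphic to a subspace of nat => real,
  so quantifying over modules realised there is no loss of generality.\<close>
definition admissible_lie :: "('v::real_vector \<Rightarrow> 'v \<Rightarrow> 'v) \<Rightarrow> bool" where
  "admissible_lie br \<longleftrightarrow>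
     (\<exists>(A :: (nat \<Rightarrow> real) set) \<rho> B.
        orthogonal_module br A \<rho> B \<and> semisimple_rep A \<rho>
      \<and> (\<exists>c \<in> H2Q br A \<rho> B. admissible_class br A \<rho> B c))"

text \<open>Bilinear extension of brackets of basis vectors e_i = axis i 1.\<close>
definition struct_br :: "('n::finite \<Rightarrow> 'n \<Rightarrow> real^'n) \<Rightarrow> real^'n \<Rightarrow> real^'n \<Rightarrow> real^'n" where
  "struct_br c u v = (\<Sum>i\<in>UNIV. \<Sum>j\<in>UNIV. (u $ i * v $ j) *\<^sub>R c i j)"

definition skew_entry :: "'n \<Rightarrow> 'n \<Rightarrow> real^'n \<Rightarrow> 'n \<Rightarrow> 'n \<Rightarrow> real^'n" where
  "skew_entry a b z i j = (if i = a \<and> j = b then z else if i = b \<and> j = a then - z else 0)"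

definition e :: "'n \<Rightarrow> real^'n::finite" where "e i = axis i 1"

text \<open>h(1): basis X1 = e 1, X2 = e 2, Y = e 3.\<close>
definition h1_br :: "real^3 \<Rightarrow> real^3 \<Rightarrow> real^3" where
  "h1_br = struct_br (skew_entry 1 2 (e 3))"

text \<open>g_{4,1}: basis X1 = e 1, X2 = e 2, Z = e 3, Y = e 4.\<close>
definition g41_br :: "real^4 \<Rightarrow> real^4 \<Rightarrow> real^4" where
  "g41_br = struct_br (\<lambda>i j. skew_entry 1 3 (e 4) i j + skew_entry 1 2 (e 3) i j)"

text \<open>g_{5,2}: basis X1 = e 1, X2 = e 2, X3 = e 3, Y = e 4, Z = e 5.\<close>
definition g52_br :: "real^5 \<Rightarrow> real^5 \<Rightarrow> real^5" where
  "g52_br = struct_br (\<lambda>i j. skew_entry 1 2 (e 4) i j + skew_entry 1 3 (e 5) i j)"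

text \<open>g_{6,4}: basis X1..X4 = e 1..e 4, Y = e 5, Z = e 6.\<close>
definition g64_br :: "real^6 \<Rightarrow> real^6 \<Rightarrow> real^6" where
  "g64_br = struct_br (\<lambda>i j. skew_entry 1 2 (e 5) i j + skew_entry 1 3 (e 6) i j
                           + skew_entry 3 4 (e 5) i j)"

text \<open>g_{6,5}: basis X1..X4 = e 1..e 4, Y = e 5, Z = e 6.\<close>
definition g65_br :: "real^6 \<Rightarrow> real^6 \<Rightarrow> real^6" where
  "g65_br = struct_br (\<lambda>i j. skew_entry 1 2 (e 5) i j + skew_entry 1 3 (e 6) i j
                           + skew_entry 2 4 (e 6) i j + skew_entry 3 4 (- e 5) i j)"

end

theory Submission
  imports Defs
begin


definition a0 :: "nat \<Rightarrow> real" where "a0 = (\<lambda>i. if i = 0 then 1 else 0)"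
definition a1 :: "nat \<Rightarrow> real" where "a1 = (\<lambda>i. if i = 1 then 1 else 0)"
definition A1 :: "(nat \<Rightarrow> real) set" where "A1 = span {a0}"
definition A2 :: "(nat \<Rightarrow> real) set" where "A2 = span {a0, a1}"
definition B1 :: "(nat \<Rightarrow> real) \<Rightarrow> (nat \<Rightarrow> real) \<Rightarrow> real" where "B1 u v = u 0 * v 0"
definition B2 :: "(nat \<Rightarrow> real) \<Rightarrow> (nat \<Rightarrow> real) \<Rightarrow> real" where "B2 u v = u 0 * v 0 - u 1 * v 1"
definition rho0 :: "'v \<Rightarrow> (nat \<Rightarrow> real) \<Rightarrow> (nat \<Rightarrow> real)" where "rho0 x u = 0"

lemma fun_ops: "(f + g) i = f i + g i" "(c *\<^sub>R f) i = c * f i" "(0::nat\<Rightarrow>real) i = 0"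
  "(f - g) i = f i - g i" "(- f) i = - f i"
  by (simp_all add: scaleR_fun_def)

lemma sub1: "subspace {u::nat\<Rightarrow>real. \<forall>i>0. u i = 0}"
  by (auto simp: subspace_def fun_ops)
lemma sub2: "subspace {u::nat\<Rightarrow>real. \<forall>i. i \<ge> 2 \<longrightarrow> u i = 0}"
  by (auto simp: subspace_def fun_ops)

lemma A1_iff: "u \<in> A1 \<longleftrightarrow> (\<forall>i>0. u i = 0)"
proof
  assume "u \<in> A1"
  moreover have "A1 \<subseteq> {u::nat\<Rightarrow>real. \<forall>i>0. u i = 0}"
    unfolding A1_def by (rule span_minimal) (auto simp: a0_def sub1)
  ultimately show "\<forall>i>0. u i = 0" by auto
next
  assume h: "\<forall>i>0. u i = 0"
  have "u = u 0 *\<^sub>R a0" using h by (auto simp: fun_eq_iff fun_ops a0_def)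
  moreover have "u 0 *\<^sub>R a0 \<in> A1" unfolding A1_def by (intro span_scale span_base) auto
  ultimately show "u \<in> A1" by simp
qed

lemma A2_iff: "u \<in> A2 \<longleftrightarrow> (\<forall>i. i \<ge> 2 \<longrightarrow> u i = 0)"
proof
  assume "u \<in> A2"
  moreover have "A2 \<subseteq> {u::nat\<Rightarrow>real. \<forall>i. i \<ge> 2 \<longrightarrow> u i = 0}"
    unfolding A2_def by (rule span_minimal) (auto simp: a0_def a1_def sub2)
  ultimately show "\<forall>i. i \<ge> 2 \<longrightarrow> u i = 0" by auto
next
  assume h: "\<forall>i. i \<ge> 2 \<longrightarrow> u i = 0"
  have "u = u 0 *\<^sub>R a0 + u 1 *\<^sub>R a1" 
  proof
    fix i show "u i = (u 0 *\<^sub>R a0 + u 1 *\<^sub>R a1) i"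
      using h[rule_format, of i] by (cases "i = 0"; cases "i = 1") (auto simp: fun_ops a0_def a1_def)
  qed
  moreover have "u 0 *\<^sub>R a0 + u 1 *\<^sub>R a1 \<in> A2" unfolding A2_def
    by (intro span_add span_scale span_base) auto
  ultimately show "u \<in> A2" by simp
qed

lemma subA1: "subspace A1" unfolding A1_def by (rule subspace_span)
lemma subA2: "subspace A2" unfolding A2_def by (rule subspace_span)

lemma nd1: "u \<in> A1 \<Longrightarrow> \<forall>v\<in>A1. B1 u v = 0 \<Longrightarrow> u = 0"
proof -
  assume u: "u \<in> A1" and o: "\<forall>v\<in>A1. B1 u v = 0"
  have "a0 \<in> A1" by (simp add: A1_iff a0_def)
  then have "u 0 = 0" using o by (auto simp: B1_def a0_def)
  then show "u = 0" using u by (auto simp: A1_iff fun_eq_iff) (metis gr0I)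
qed

lemma nd2: "u \<in> A2 \<Longrightarrow> \<forall>v\<in>A2. B2 u v = 0 \<Longrightarrow> u = 0"
proof -
  assume u: "u \<in> A2" and o: "\<forall>v\<in>A2. B2 u v = 0"
  have "a0 \<in> A2" "a1 \<in> A2" by (simp_all add: A2_iff a0_def a1_def)
  then have "u 0 = 0" "u 1 = 0" using o by (auto simp: B2_def a0_def a1_def)
  then show "u = 0" using u by (auto simp: A2_iff fun_eq_iff) (metis One_nat_def less_2_cases not_le)
qed

lemma isrep0: "is_rep br A rho0" if "subspace A" for A :: "(nat\<Rightarrow>real) set"
  using that by (simp add: is_rep_def rho0_def linear_on_def linear_zero subspace_0)

lemma nsf1: "nondeg_sym_form A1 B1"
  unfolding nondeg_sym_form_def linear_on_def
  apply (intro conjI)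
  subgoal by (simp add: B1_def fun_ops algebra_simps)
  subgoal by (simp add: B1_def)
  subgoal using nd1 by blast
  done

lemma nsf2: "nondeg_sym_form A2 B2"
  unfolding nondeg_sym_form_def linear_on_def
  apply (intro conjI)
  subgoal by (simp add: B2_def fun_ops algebra_simps)
  subgoal by (simp add: B2_def)
  subgoal using nd2 by blast
  done

lemma om1: "orthogonal_module br A1 rho0 B1"
  unfolding orthogonal_module_def fin_dim_subspace_def
  apply (intro conjI subA1 isrep0 nsf1)
  subgoal by (rule exI[of _ "{a0}"]) (simp add: A1_def)
  by (simp add: rho0_def B1_def)

lemma om2: "orthogonal_module br A2 rho0 B2"
  unfolding orthogonal_module_def fin_dim_subspace_def
  apply (intro conjI subA2 isrep0 nsf2)
  subgoal by (rule exI[of _ "{a0,a1}"]) (simp add: A2_def)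
  by (simp add: rho0_def B2_def)

lemma inv_zero: "invariant_subspace A rho0 {0}" if "subspace A" for A :: "(nat\<Rightarrow>real) set"
  using that by (simp add: invariant_subspace_def subspace_single_0 rho0_def subspace_0)

lemma inv_full: "invariant_subspace A rho0 A" if "subspace A" for A :: "(nat\<Rightarrow>real) set"
  using that by (simp add: invariant_subspace_def rho0_def subspace_0)

lemma ss_triv:
  assumes "subspace A" "invariant_subspace A (rho0::'v \<Rightarrow> _) U" "U = {0} \<or> U = A"
  shows "\<exists>W. invariant_subspace A (rho0::'v \<Rightarrow> _) W \<and> U \<inter> W = {0} \<and> {u + w | u w. u \<in> U \<and> w \<in> W} = A"
  using assms(3)
proof
  assume "U = {0}" then show ?thesis
    using assms(1) by (intro exI[of _ A]) (auto simp: inv_full subspace_0)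
next
  assume "U = A" then show ?thesis
    using assms(1) by (intro exI[of _ "{0}"]) (auto simp: inv_zero subspace_0)
qed

lemma A1_repr: "u \<in> A1 \<Longrightarrow> u = u 0 *\<^sub>R a0"
proof (rule ext)
  fix i assume "u \<in> A1"
  then show "u i = (u 0 *\<^sub>R a0) i" unfolding A1_iff by (cases "i = 0") (auto simp: fun_ops a0_def)
qed

lemma ss1: "semisimple_rep A1 rho0"
  unfolding semisimple_rep_def
proof (intro allI impI)
  fix U assume inv: "invariant_subspace A1 rho0 U"
  then have sU: "subspace U" and UA: "U \<subseteq> A1" by (auto simp: invariant_subspace_def)
  have "U = {0} \<or> U = A1"
  proof (cases "\<exists>u\<in>U. u \<noteq> 0")
    case True
    then obtain u where u: "u \<in> U" "u \<noteq> 0" by auto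
    obtain c where ur: "u = c *\<^sub>R a0" using u UA A1_repr by blast
    have "c \<noteq> 0" using ur u by auto
    then have "a0 = (1 / c) *\<^sub>R u" using ur by simp
    then have "a0 \<in> U" using subspace_scale[OF sU u(1), of "1/c"] by simp
    then have "A1 \<subseteq> U" unfolding A1_def using sU by (simp add: span_minimal)
    then show ?thesis using UA by (intro disjI2 equalityI)
  next
    case False 
    have "0 \<in> U" using sU by (rule subspace_0)
    then have "U = {0}" using False by blast
    then show ?thesis ..
  qed
  then show "\<exists>W. invariant_subspace A1 rho0 W \<and> U \<inter> W = {0} \<and> {u + w |u w. u \<in> U \<and> w \<in> W} = A1"
  proof
    assume "U = {0}" then show ?thesis
      using subA1 by (intro exI[of _ A1]) (auto simp: inv_full subspace_0)
  next
    assume "U = A1" then show ?thesis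
      using subA1 by (intro exI[of _ "{0}"]) (auto simp: inv_zero subspace_0)
  qed
qed

lemma A2_eqI: "f \<in> A2 \<Longrightarrow> g \<in> A2 \<Longrightarrow> f 0 = g 0 \<Longrightarrow> f 1 = g 1 \<Longrightarrow> f = g"
proof (rule ext)
  fix i assume "f \<in> A2" "g \<in> A2" "f 0 = g 0" "f 1 = g 1"
  then show "f i = g i" unfolding A2_iff by (cases "i \<ge> 2") (auto simp: not_le less_2_cases_iff)
qed


lemma fr: "(x::real) / n * p + y / n * q = (x * p + y * q) / n"
  by (simp add: add_divide_distrib)

lemma solve2:
  fixes ua ub xa xb ba bb :: real
  assumes d: "ua*xb - ub*xa \<noteq> 0"
  shows "ba = ((ba*xb - bb*xa)/(ua*xb - ub*xa)) * ua + ((ua*bb - ub*ba)/(ua*xb - ub*xa)) * xa"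
    "bb = ((ba*xb - bb*xa)/(ua*xb - ub*xa)) * ub + ((ua*bb - ub*ba)/(ua*xb - ub*xa)) * xb"
proof -
  let ?d = "ua*xb - ub*xa"
  have e1: "(ba*xb - bb*xa)*ua + (ua*bb - ub*ba)*xa = ba*?d" by (simp add: algebra_simps)
  have e2: "(ba*xb - bb*xa)*ub + (ua*bb - ub*ba)*xb = bb*?d" by (simp add: algebra_simps)
  have "((ba*xb - bb*xa)/?d) * ua + ((ua*bb - ub*ba)/?d) * xa = ((ba*xb - bb*xa)*ua + (ua*bb - ub*ba)*xa)/?d"
    by (rule fr)
  also have "\<dots> = ba" using e1 d by simp
  finally show "ba = ((ba*xb - bb*xa)/?d) * ua + ((ua*bb - ub*ba)/?d) * xa" by simp
  have "((ba*xb - bb*xa)/?d) * ub + ((ua*bb - ub*ba)/?d) * xb = ((ba*xb - bb*xa)*ub + (ua*bb - ub*ba)*xb)/?d"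
    by (rule fr)
  also have "\<dots> = bb" using e2 d by simp
  finally show "bb = ((ba*xb - bb*xa)/?d) * ub + ((ua*bb - ub*ba)/?d) * xb" by simp
qed

lemma decomp2:
  fixes ua ub ca cb :: real
  assumes n: "ua*ua + ub*ub \<noteq> 0"
  shows "ca = ((ca*ua + cb*ub)/(ua*ua + ub*ub)) * ua + ((cb*ua - ca*ub)/(ua*ua + ub*ub)) * (- ub)"
    "cb = ((ca*ua + cb*ub)/(ua*ua + ub*ub)) * ub + ((cb*ua - ca*ub)/(ua*ua + ub*ub)) * ua"
proof -
  let ?n = "ua*ua + ub*ub"
  have e1: "(ca*ua + cb*ub)*ua + (cb*ua - ca*ub)*(-ub) = ca*?n" by (simp add: algebra_simps)
  have e2: "(ca*ua + cb*ub)*ub + (cb*ua - ca*ub)*ua = cb*?n" by (simp add: algebra_simps)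
  have "((ca*ua + cb*ub)/?n) * ua + ((cb*ua - ca*ub)/?n) * (- ub) = ((ca*ua + cb*ub)*ua + (cb*ua - ca*ub)*(-ub))/?n"
    by (rule fr)
  also have "\<dots> = ca" using e1 n by simp
  finally show "ca = ((ca*ua + cb*ub)/?n) * ua + ((cb*ua - ca*ub)/?n) * (- ub)" by simp
  have "((ca*ua + cb*ub)/?n) * ub + ((cb*ua - ca*ub)/?n) * ua = ((ca*ua + cb*ub)*ub + (cb*ua - ca*ub)*ua)/?n"
    by (rule fr)
  also have "\<dots> = cb" using e2 n by simp
  finally show "cb = ((ca*ua + cb*ub)/?n) * ub + ((cb*ua - ca*ub)/?n) * ua" by simp
qed

lemma ss2: "semisimple_rep A2 rho0"
  unfolding semisimple_rep_def
proof (intro allI impI)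
  fix U assume inv: "invariant_subspace A2 rho0 U"
  then have sU: "subspace U" and UA: "U \<subseteq> A2" by (auto simp: invariant_subspace_def)
  show "\<exists>W. invariant_subspace A2 rho0 W \<and> U \<inter> W = {0} \<and> {u + w |u w. u \<in> U \<and> w \<in> W} = A2"
  proof (cases "U = {0} \<or> U = A2")
    case True then show ?thesis
    proof
      assume "U = {0}" then show ?thesis
        using subA2 by (intro exI[of _ A2]) (auto simp: inv_full subspace_0)
    next
      assume "U = A2" then show ?thesis
        using subA2 by (intro exI[of _ "{0}"]) (auto simp: inv_zero subspace_0)
    qed
  next
    case False
    then obtain u where u: "u \<in> U" "u \<noteq> 0" using sU subspace_0 by blast
    from False obtain v where v: "v \<in> A2" "v \<notin> U" using UA by blast
    have uA: "u \<in> A2" using u UA by auto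
    have n0: "u 0 * u 0 + u 1 * u 1 \<noteq> 0"
    proof
      assume "u 0 * u 0 + u 1 * u 1 = 0"
      then have "u 0 = 0" "u 1 = 0" by (simp_all add: sum_squares_eq_zero_iff)
      then have "u = 0" using A2_eqI[OF uA, of 0] by (simp add: subspace_0[OF subA2])
      then show False using u by simp
    qed
    have line: "u 0 * x 1 = u 1 * x 0" if x: "x \<in> U" for x
    proof (rule ccontr)
      assume d: "u 0 * x 1 \<noteq> u 1 * x 0"
      let ?d = "u 0 * x 1 - u 1 * x 0"
      have xA: "x \<in> A2" using x UA by auto
      let ?y = "((v 0 * x 1 - v 1 * x 0) / ?d) *\<^sub>R u + ((u 0 * v 1 - u 1 * v 0) / ?d) *\<^sub>R x"
      have yA: "?y \<in> A2" using uA xA subA2 by (simp add: subspace_add subspace_scale)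
      have "v = ?y"
        apply (rule A2_eqI[OF v(1) yA])
        using solve2[where ua="u 0" and xb="x 1" and ub="u 1" and xa="x 0" and ba="v 0" and bb="v 1"] d by (simp_all add: fun_ops)
      moreover have "?y \<in> U" using u x sU by (simp add: subspace_add subspace_scale)
      ultimately show False using v by simp
    qed
    define w :: "nat \<Rightarrow> real" where "w = (\<lambda>i. if i = 0 then - u 1 else if i = 1 then u 0 else 0)"
    have wA: "w \<in> A2" by (simp add: A2_iff w_def)
    let ?W = "span {w}"
    have WA: "?W \<subseteq> A2" using wA subA2 by (simp add: span_minimal)
    have invW: "invariant_subspace A2 rho0 ?W"
      using WA by (simp add: invariant_subspace_def rho0_def span_zero)
    have int: "U \<inter> ?W = {0}"
    proof (intro equalityI subsetI)
      fix x assume x: "x \<in> U \<inter> ?W"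
      then obtain c where c: "x = c *\<^sub>R w" by (auto simp: span_singleton)
      have "u 0 * x 1 = u 1 * x 0" using line x by auto
      then have "c * (u 0 * u 0 + u 1 * u 1) = 0" using c by (simp add: w_def fun_ops algebra_simps)
      then have "c = 0" using n0 by (metis mult_eq_0_iff)
      then show "x \<in> {0}" using c by simp
    next
      fix x :: "nat \<Rightarrow> real" assume "x \<in> {0}" then show "x \<in> U \<inter> ?W" using sU by (simp add: subspace_0 span_zero)
    qed
    have sum: "{p + q |p q. p \<in> U \<and> q \<in> ?W} = A2"
    proof (intro equalityI subsetI)
      fix x assume "x \<in> {p + q |p q. p \<in> U \<and> q \<in> ?W}"
      then show "x \<in> A2" using UA WA subA2 by (auto intro: subspace_add)
    next
      fix a assume a: "a \<in> A2"
      let ?n = "u 0 * u 0 + u 1 * u 1"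
      let ?p = "((a 0 * u 0 + a 1 * u 1) / ?n) *\<^sub>R u"
      let ?q = "((a 1 * u 0 - a 0 * u 1) / ?n) *\<^sub>R w"
      have pU: "?p \<in> U" using u sU by (simp add: subspace_scale)
      have qW: "?q \<in> ?W" by (simp add: span_scale span_base)
      have "?p + ?q \<in> A2" using pU qW UA WA subA2 by (auto intro: subspace_add)
      then have "a = ?p + ?q"
        apply (intro A2_eqI[OF a])
        using decomp2[where ua="u 0" and ub="u 1" and ca="a 0" and cb="a 1"] n0 by (simp_all add: fun_ops w_def)
      then show "a \<in> {p + q |p q. p \<in> U \<and> q \<in> ?W}" using pU qW by blast
    qed
    show ?thesis using invW int sum by blast
  qed
qed


lemma adm_intro:
  fixes br :: "'v::real_vector \<Rightarrow> 'v \<Rightarrow> 'v" and A :: "(nat\<Rightarrow>real) set"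
  assumes om: "orthogonal_module br A rho0 B" and ss: "semisimple_rep A (rho0::'v \<Rightarrow> _)"
   and Z: "(\<alpha>, \<gamma>) \<in> Z2Q br A rho0 B" and B0: "\<forall>u. B u 0 = 0" and inA: "\<forall>x y. \<alpha> x y \<in> A"
   and cond: "\<forall>k. cond_A br A rho0 B \<alpha> \<gamma> k \<and> cond_B br B \<alpha> k"
  shows "admissible_lie br"
proof -
  let ?c = "qact br rho0 B (\<alpha>,\<gamma>) ` (C1 A \<times> C2s)"
  have c: "?c \<in> H2Q br A rho0 B" using Z by (auto simp: H2Q_def)
  have sA: "subspace A" using om by (simp add: orthogonal_module_def fin_dim_subspace_def)
  have z1: "(\<lambda>_::'v. 0::nat\<Rightarrow>real) \<in> C1 A" using sA by (simp add: C1_def linear_zero subspace_0)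
  have z2: "(\<lambda>(_::'v) (_::'v). 0::real) \<in> C2s" by (simp add: C2s_def bilinear_map_def linear_zero)
  have "qact br rho0 B (\<alpha>,\<gamma>) ((\<lambda>_::'v. 0::nat\<Rightarrow>real), (\<lambda>(_::'v) (_::'v). 0::real)) = (\<alpha>,\<gamma>)"
    by (simp add: qact_def d1_def d2s_def wedge21_def rho0_def B0)
  then have mem: "(\<alpha>,\<gamma>) \<in> ?c" using z1 z2 by (metis SigmaI image_eqI)
  have "admissible_class br A rho0 B ?c"
    unfolding admissible_class_def
    apply (rule exI[of _ \<alpha>], rule exI[of _ \<gamma>])
    using mem inA cond by (simp add: invariants_def rho0_def)
  then show ?thesis unfolding admissible_lie_def
    apply (intro exI[of _ A] exI[of _ rho0] exI[of _ B])
    using om ss c by blast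
qed

lemma lin_sc: "linear f \<Longrightarrow> linear (\<lambda>y. f y *\<^sub>R (a::nat\<Rightarrow>real))"
  by (rule linearI) (simp_all add: linear_add linear_cmul scaleR_add_left)

lemma aki_sub: "subspace A \<Longrightarrow> \<forall>x y. \<alpha> x y \<in> A \<Longrightarrow> alpha_ker_image br \<alpha> k \<subseteq> A"
  unfolding alpha_ker_image_def by (auto intro!: subspace_sum)

lemma adm1:
  fixes br :: "'v::real_vector \<Rightarrow> 'v \<Rightarrow> 'v" and \<omega> :: "'v \<Rightarrow> 'v \<Rightarrow> real" and \<gamma>
  assumes l1: "\<forall>x. linear (\<omega> x)" and l2: "\<forall>y. linear (\<lambda>x. \<omega> x y)" and alt: "\<forall>x. \<omega> x x = 0"
    and g: "\<gamma> \<in> C3s"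
    and cl: "\<forall>x y z. - \<omega> (br x y) z + \<omega> (br x z) y - \<omega> (br y z) x = 0"
    and dg: "\<forall>w x y z. d3s br \<gamma> w x y z = \<omega> w x * \<omega> y z - \<omega> w y * \<omega> x z + \<omega> w z * \<omega> x y"
    and cA: "\<forall>k. cond_A br A1 rho0 B1 (\<lambda>x y. \<omega> x y *\<^sub>R a0) \<gamma> k"
  shows "admissible_lie br"
proof -
  let ?\<alpha> = "\<lambda>x y. \<omega> x y *\<^sub>R a0"
  have inA: "\<forall>x y. ?\<alpha> x y \<in> A1" by (simp add: A1_def span_scale span_base)
  have C2: "?\<alpha> \<in> C2 A1"
    using l1 l2 alt inA by (simp add: C2_def bilinear_map_def lin_sc)
  have d2: "d2 br rho0 ?\<alpha> x y z = 0" for x y z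
  proof -
    have "d2 br rho0 ?\<alpha> x y z = (- \<omega> (br x y) z + \<omega> (br x z) y - \<omega> (br y z) x) *\<^sub>R a0"
      by (simp add: d2_def rho0_def algebra_simps)
    then show ?thesis using cl by simp
  qed
  have d3: "d3s br \<gamma> w x y z = (1/2) * wedge22 B1 ?\<alpha> ?\<alpha> w x y z" for w x y z
    using dg by (simp add: wedge22_def B1_def fun_ops a0_def algebra_simps)
  have Z: "(?\<alpha>, \<gamma>) \<in> Z2Q br A1 rho0 B1"
    using C2 g d2 d3 by (simp add: Z2Q_def)
  have cB: "cond_B br B1 ?\<alpha> k" for k
    unfolding cond_B_def nondegenerate_sub_def
  proof (intro ballI impI)
    fix u assume u: "u \<in> alpha_ker_image br ?\<alpha> k" and o: "\<forall>v\<in>alpha_ker_image br ?\<alpha> k. B1 u v = 0"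
    have uA: "u \<in> A1" using u aki_sub[OF subA1 inA] by blast
    have "B1 u u = 0" using o u by blast
    then have "u 0 * u 0 = 0" by (simp add: B1_def)
    then have "u 0 = 0" by simp
    then show "u = 0" using A1_repr[OF uA] by simp
  qed
  show ?thesis
    by (rule adm_intro[OF om1 ss1 Z _ inA]) (simp_all add: B1_def cA cB)
qed


lemma UNIV6: "(UNIV::6 set) = {0,1,2,3,4,5}"
  by (rule sym, rule card_subset_eq) auto
lemma UNIV5: "(UNIV::5 set) = {0,1,2,3,4}"
  by (rule sym, rule card_subset_eq) auto
lemma UNIV4: "(UNIV::4 set) = {0,1,2,3}"
  by (rule sym, rule card_subset_eq) auto
lemma UNIV3': "(UNIV::3 set) = {0,1,2}"
  by (rule sym, rule card_subset_eq) auto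

lemma all6: "(\<forall>i::6. P i) = (P 0 \<and> P 1 \<and> P 2 \<and> P 3 \<and> P 4 \<and> P 5)"
proof -
  have "(\<forall>i::6. P i) = (\<forall>i\<in>UNIV. P i)" by simp
  also have "\<dots> = (\<forall>i\<in>{0,1,2,3,4,5}. P i)" by (simp only: UNIV6)
  finally show ?thesis by simp
qed
lemma all5: "(\<forall>i::5. P i) = (P 0 \<and> P 1 \<and> P 2 \<and> P 3 \<and> P 4)"
proof -
  have "(\<forall>i::5. P i) = (\<forall>i\<in>UNIV. P i)" by simp
  also have "\<dots> = (\<forall>i\<in>{0,1,2,3,4}. P i)" by (simp only: UNIV5)
  finally show ?thesis by simp
qed
lemma all4: "(\<forall>i::4. P i) = (P 0 \<and> P 1 \<and> P 2 \<and> P 3)"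
proof -
  have "(\<forall>i::4. P i) = (\<forall>i\<in>UNIV. P i)" by simp
  also have "\<dots> = (\<forall>i\<in>{0,1,2,3}. P i)" by (simp only: UNIV4)
  finally show ?thesis by simp
qed
lemma all3: "(\<forall>i::3. P i) = (P 0 \<and> P 1 \<and> P 2)"
proof -
  have "(\<forall>i::3. P i) = (\<forall>i\<in>UNIV. P i)" by simp
  also have "\<dots> = (\<forall>i\<in>{0,1,2}. P i)" by (simp only: UNIV3')
  finally show ?thesis by simp
qed

lemma sb_comp: "struct_br c u v $ k = (\<Sum>i\<in>UNIV. \<Sum>j\<in>UNIV. u $ i * v $ j * c i j $ k)"
  by (simp add: struct_br_def)

lemma h1_comp: "h1_br u v $ k = (if k = 0 then u $ 1 * v $ 2 - u $ 2 * v $ 1 else 0)"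
  unfolding h1_br_def sb_comp UNIV3'
  by (simp add: skew_entry_def e_def axis_def algebra_simps)

lemma g41_comp: "g41_br u v $ k = (if k = 0 then u $ 1 * v $ 3 - u $ 3 * v $ 1
   else if k = 3 then u $ 1 * v $ 2 - u $ 2 * v $ 1 else 0)"
  unfolding g41_br_def sb_comp UNIV4
  by (simp add: skew_entry_def e_def axis_def algebra_simps)

lemma g52_comp: "g52_br u v $ k = (if k = 4 then u $ 1 * v $ 2 - u $ 2 * v $ 1
   else if k = 0 then u $ 1 * v $ 3 - u $ 3 * v $ 1 else 0)"
  unfolding g52_br_def sb_comp UNIV5
  by (simp add: skew_entry_def e_def axis_def algebra_simps)

lemma g64_comp: "g64_br u v $ k = (if k = 5 then u $ 1 * v $ 2 - u $ 2 * v $ 1 + (u $ 3 * v $ 4 - u $ 4 * v $ 3)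
   else if k = 0 then u $ 1 * v $ 3 - u $ 3 * v $ 1 else 0)"
  unfolding g64_br_def sb_comp UNIV6
  by (simp add: skew_entry_def e_def axis_def algebra_simps)

lemma g65_comp: "g65_br u v $ k = (if k = 5 then u $ 1 * v $ 2 - u $ 2 * v $ 1 - (u $ 3 * v $ 4 - u $ 4 * v $ 3)
   else if k = 0 then u $ 1 * v $ 3 - u $ 3 * v $ 1 + u $ 2 * v $ 4 - u $ 4 * v $ 2 else 0)"
  unfolding g65_br_def sb_comp UNIV6
  by (simp add: skew_entry_def e_def axis_def algebra_simps)

lemma condA_triv:
  assumes "\<forall>L0\<in>centre br. (\<forall>L. \<alpha> L L0 = 0) \<longrightarrow> L0 = 0"
  shows "cond_A br A \<rho> B \<alpha> \<gamma> k"
  using assms unfolding cond_A_def lk_def by (auto split: if_splits)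


lemma sc_a0: "(c *\<^sub>R a0 = 0) = (c = 0)"
proof
  assume "c *\<^sub>R a0 = 0"
  then have "(c *\<^sub>R a0) 0 = 0" by (simp only: fun_ops(3))
  then show "c = 0" by (simp add: fun_ops a0_def)
qed simp

lemma lcs_Z: "br x y \<in> lcs br (Suc (Suc 0))"
  by (auto intro!: span_base)

lemma lcs_zero:
  fixes br :: "'v::real_vector \<Rightarrow> 'v \<Rightarrow> 'v"
  assumes V: "subspace V" and inV: "\<forall>x y. br x y \<in> V" and kill: "\<forall>x. \<forall>v\<in>V. br x v = 0"
  shows "lcs br (Suc (Suc (Suc n))) = {0}"
proof (induction n)
  case 0
  have "{br x y | x y. y \<in> lcs br (Suc 0)} \<subseteq> V" using inV by auto
  then have "lcs br (Suc (Suc 0)) \<subseteq> V"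
    by (simp only: lcs.simps) (rule span_minimal[OF _ V])
  then have "{br x y | x y. y \<in> lcs br (Suc (Suc 0))} \<subseteq> {0}" using kill by auto
  then have "lcs br (Suc (Suc (Suc 0))) \<subseteq> span {0}"
    by (simp only: lcs.simps) (rule span_mono)
  then show ?case using span_zero[of "{br x y | x y. y \<in> lcs br (Suc (Suc 0))}"] by auto
next
  case (Suc n)
  have b0: "br x 0 = 0" for x using kill V by (simp add: subspace_0)
  have "{br x y | x y. y \<in> lcs br (Suc (Suc (Suc n)))} \<subseteq> {0}" using Suc b0 by auto
  then have "lcs br (Suc (Suc (Suc (Suc n)))) \<subseteq> span {0}"
    by (simp only: lcs.simps) (rule span_mono)
  then show ?case using span_zero[of "{br x y | x y. y \<in> lcs br (Suc (Suc (Suc n)))}"] by auto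
qed

lemma lcs_zero':
  fixes br :: "'v::real_vector \<Rightarrow> 'v \<Rightarrow> 'v"
  assumes "subspace V" "\<forall>x y. br x y \<in> V" "\<forall>x. \<forall>v\<in>V. br x v = 0" "k \<ge> 2"
  shows "lcs br (Suc k) = {0}"
proof -
  obtain n where "k = Suc (Suc n)" using assms(4) by (metis add_2_eq_Suc le_Suc_ex)
  then show ?thesis using lcs_zero[OF assms(1-3)] by simp
qed

lemma zero_lcs: "0 \<in> lcs br k"
proof (cases k)
  case (Suc m) then show ?thesis by (cases m) (auto simp: span_zero)
qed simp

lemma condA_two:
  fixes br :: "'v::real_vector \<Rightarrow> 'v \<Rightarrow> 'v"
  assumes zero3: "\<forall>k\<ge>2. lcs br (Suc k) = {0}"
    and Zl: "Zv \<in> lcs br (Suc (Suc 0))"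
    and key: "\<forall>L0 \<in> centre br. (\<forall>L. \<alpha> L L0 = 0) \<longrightarrow> \<gamma> Lt L0 Zv = 0 \<longrightarrow> L0 = 0"
    and aZ: "\<alpha> Lt Zv = 0" and bZ: "br Lt Zv = 0" and B0: "\<forall>u. B u 0 = 0"
  shows "cond_A br A \<rho> B \<alpha> \<gamma> k"
  unfolding cond_A_def
proof (intro ballI impI)
  fix L0 assume L0: "L0 \<in> lk br A \<rho> k"
    and h: "\<exists>A0\<in>A. \<exists>Z0. linear_on (lcs br (Suc k)) Z0 \<and>
           (\<forall>L. \<alpha> L L0 = 0 \<and> (\<forall>X\<in>lcs br (Suc k). \<gamma> L L0 X = - B A0 (\<alpha> L X) + Z0 (br L X)))"
  have cL0: "L0 \<in> centre br" using L0 by (simp add: lk_def split: if_splits)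
  show "L0 = 0"
  proof (cases "k \<ge> 2")
    case True
    then have "L0 \<in> lcs br (Suc k)" using L0 by (simp add: lk_def split: if_splits)
    then show ?thesis using zero3 True by auto
  next
    case False
    then have "k = 0 \<or> k = 1" by auto
    then have Zk: "Zv \<in> lcs br (Suc k)" using Zl by auto
    obtain A0 Z0 where lin: "linear_on (lcs br (Suc k)) Z0"
      and hh: "\<forall>L. \<alpha> L L0 = 0 \<and> (\<forall>X\<in>lcs br (Suc k). \<gamma> L L0 X = - B A0 (\<alpha> L X) + Z0 (br L X))"
      using h by blast
    have "Z0 ((0::real) *\<^sub>R 0) = 0 *\<^sub>R Z0 0" using lin zero_lcs unfolding linear_on_def by blast
    then have Z00: "Z0 0 = 0" by simp
    have "\<gamma> Lt L0 Zv = 0" using hh Zk aZ bZ B0 Z00 by simp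
    then show ?thesis using key cL0 hh by blast
  qed
qed


definition om_h1 :: "real^3 \<Rightarrow> real^3 \<Rightarrow> real" where
  "om_h1 u v = u $ 1 * v $ 0 - u $ 0 * v $ 1"

lemma adm_h1: "admissible_lie h1_br"
proof (rule adm1[where \<omega> = om_h1 and \<gamma> = "\<lambda>_ _ _. 0"])
  show "\<forall>x. linear (om_h1 x)"
    by (intro allI linearI) (simp_all add: om_h1_def algebra_simps)
  show "\<forall>y. linear (\<lambda>x. om_h1 x y)"
    by (intro allI linearI) (simp_all add: om_h1_def algebra_simps)
  show "\<forall>x. om_h1 x x = 0" by (simp add: om_h1_def)
  show "(\<lambda>_ _ _. 0) \<in> C3s" by (simp add: C3s_def trilinear_map_def linear_zero)
  show "\<forall>x y z. - om_h1 (h1_br x y) z + om_h1 (h1_br x z) y - om_h1 (h1_br y z) x = 0"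
    by (simp add: om_h1_def h1_comp algebra_simps)
  show "\<forall>w x y z. d3s h1_br (\<lambda>_ _ _. 0) w x y z = om_h1 w x * om_h1 y z - om_h1 w y * om_h1 x z + om_h1 w z * om_h1 x y"
    by (simp add: d3s_def om_h1_def algebra_simps)
  show "\<forall>k. cond_A h1_br A1 rho0 B1 (\<lambda>x y. om_h1 x y *\<^sub>R a0) (\<lambda>_ _ _. 0) k"
  proof (intro allI condA_triv ballI impI)
    fix L0 :: "real^3" assume c: "L0 \<in> centre h1_br" and a: "\<forall>L. om_h1 L L0 *\<^sub>R a0 = 0"
    have "h1_br (axis 1 1) L0 $ 0 = 0" "h1_br (axis 2 1) L0 $ 0 = 0" using c by (auto simp: centre_def)
    then have "L0 $ 1 = 0" "L0 $ 2 = 0" by (simp_all add: h1_comp axis_def)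
    moreover have "om_h1 (axis 1 1) L0 = 0" using a[rule_format, of "axis 1 1"] by (simp only: sc_a0)
    then have "L0 $ 0 = 0" by (simp add: om_h1_def axis_def)
    ultimately show "L0 = 0" by (simp add: vec_eq_iff all3)
  qed
qed


definition om41 :: "real^4 \<Rightarrow> real^4 \<Rightarrow> real" where
  "om41 u v = u $ 1 * v $ 0 - u $ 0 * v $ 1"

lemma adm_g41: "admissible_lie g41_br"
proof (rule adm1[where \<omega> = om41 and \<gamma> = "\<lambda>_ _ _. 0"])
  show "\<forall>x. linear (om41 x)"
    by (intro allI linearI) (simp_all add: om41_def algebra_simps)
  show "\<forall>y. linear (\<lambda>x. om41 x y)"
    by (intro allI linearI) (simp_all add: om41_def algebra_simps)
  show "\<forall>x. om41 x x = 0" by (simp add: om41_def)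
  show "(\<lambda>_ _ _. 0) \<in> C3s" by (simp add: C3s_def trilinear_map_def linear_zero)
  show "\<forall>x y z. - om41 (g41_br x y) z + om41 (g41_br x z) y - om41 (g41_br y z) x = 0"
    by (simp add: om41_def g41_comp algebra_simps)
  show "\<forall>w x y z. d3s g41_br (\<lambda>_ _ _. 0) w x y z = om41 w x * om41 y z - om41 w y * om41 x z + om41 w z * om41 x y"
    by (simp add: d3s_def om41_def algebra_simps)
  show "\<forall>k. cond_A g41_br A1 rho0 B1 (\<lambda>x y. om41 x y *\<^sub>R a0) (\<lambda>_ _ _. 0) k"
  proof (intro allI condA_triv ballI impI)
    fix L0 :: "real^4" assume c: "L0 \<in> centre g41_br" and a: "\<forall>L. om41 L L0 *\<^sub>R a0 = 0"
    have "g41_br (axis 1 1) L0 $ 0 = 0" "g41_br (axis 1 1) L0 $ 3 = 0" "g41_br (axis 2 1) L0 $ 3 = 0"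
      using c by (auto simp: centre_def)
    then have "L0 $ 3 = 0" "L0 $ 2 = 0" "L0 $ 1 = 0" by (simp_all add: g41_comp axis_def)
    moreover have "om41 (axis 1 1) L0 = 0" using a[rule_format, of "axis 1 1"] by (simp only: sc_a0)
    then have "L0 $ 0 = 0" by (simp add: om41_def axis_def)
    ultimately show "L0 = 0" by (simp add: vec_eq_iff all4)
  qed
qed


definition om52 :: "real^5 \<Rightarrow> real^5 \<Rightarrow> real" where
  "om52 u v = u $ 3 * v $ 0 - u $ 0 * v $ 3"

definition ga52 :: "real^5 \<Rightarrow> real^5 \<Rightarrow> real^5 \<Rightarrow> real" where
  "ga52 u v w = u $ 1 * (v $ 4 * w $ 0 - v $ 0 * w $ 4) - v $ 1 * (u $ 4 * w $ 0 - u $ 0 * w $ 4)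
     + w $ 1 * (u $ 4 * v $ 0 - u $ 0 * v $ 4)"

lemma adm_g52: "admissible_lie g52_br"
proof (rule adm1[where \<omega> = om52 and \<gamma> = ga52])
  show "\<forall>x. linear (om52 x)"
    by (intro allI linearI) (simp_all add: om52_def algebra_simps)
  show "\<forall>y. linear (\<lambda>x. om52 x y)"
    by (intro allI linearI) (simp_all add: om52_def algebra_simps)
  show "\<forall>x. om52 x x = 0" by (simp add: om52_def)
  show "ga52 \<in> C3s"
    unfolding C3s_def trilinear_map_def
    by (auto intro!: linearI simp: ga52_def algebra_simps)
  show "\<forall>x y z. - om52 (g52_br x y) z + om52 (g52_br x z) y - om52 (g52_br y z) x = 0"
    by (simp add: om52_def g52_comp algebra_simps)
  show "\<forall>w x y z. d3s g52_br ga52 w x y z = om52 w x * om52 y z - om52 w y * om52 x z + om52 w z * om52 x y"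
    by (simp add: d3s_def om52_def ga52_def g52_comp algebra_simps)
  let ?V = "{v::real^5. v $ 1 = 0 \<and> v $ 2 = 0 \<and> v $ 3 = 0}"
  have V: "subspace ?V" by (simp add: subspace_def)
  have inV: "\<forall>x y. g52_br x y \<in> ?V" by (simp add: g52_comp)
  have kill: "\<forall>x. \<forall>v\<in>?V. g52_br x v = 0" by (simp add: g52_comp vec_eq_iff all5)
  have zero3: "\<forall>k\<ge>2. lcs g52_br (Suc k) = {0}" using lcs_zero'[OF V inV kill] by blast
  have Zv: "axis 0 1 = g52_br (axis 1 1) (axis 3 1)"
    by (simp add: g52_comp vec_eq_iff all5 axis_def)
  show "\<forall>k. cond_A g52_br A1 rho0 B1 (\<lambda>x y. om52 x y *\<^sub>R a0) ga52 k"
  proof -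
    have h1: "axis 0 1 \<in> lcs g52_br (Suc (Suc 0))" by (subst Zv) (rule lcs_Z)
    have h2: "om52 (axis 1 1) (axis 0 1) *\<^sub>R a0 = 0" by (simp add: om52_def axis_def)
    have h3: "g52_br (axis 1 1) (axis 0 1) = 0" by (simp add: g52_comp vec_eq_iff all5 axis_def)
    have h4: "\<forall>u. B1 u 0 = 0" by (simp add: B1_def fun_ops)
    have h5: "\<forall>L0\<in>centre g52_br. (\<forall>L. om52 L L0 *\<^sub>R a0 = 0) \<longrightarrow> ga52 (axis 1 1) L0 (axis 0 1) = 0 \<longrightarrow> L0 = 0"
    proof (intro ballI impI)
      fix L0 :: "real^5" assume c: "L0 \<in> centre g52_br" and a: "\<forall>L. om52 L L0 *\<^sub>R a0 = 0"
        and g: "ga52 (axis 1 1) L0 (axis 0 1) = 0"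
      have "g52_br (axis 1 1) L0 $ 4 = 0" "g52_br (axis 1 1) L0 $ 0 = 0" "g52_br (axis 2 1) L0 $ 4 = 0"
        using c by (auto simp: centre_def)
      then have "L0 $ 2 = 0" "L0 $ 3 = 0" "L0 $ 1 = 0" by (simp_all add: g52_comp axis_def)
      moreover have "om52 (axis 3 1) L0 = 0" using a[rule_format, of "axis 3 1"] by (simp only: sc_a0)
      then have "L0 $ 0 = 0" by (simp add: om52_def axis_def)
      moreover have "L0 $ 4 = 0" using g by (simp add: ga52_def axis_def)
      ultimately show "L0 = 0" by (simp add: vec_eq_iff all5)
    qed
    show ?thesis using condA_two[where \<alpha> = "\<lambda>x y. om52 x y *\<^sub>R a0" and \<gamma> = ga52 and B = B1 and Lt = "axis 1 1" and Zv = "axis 0 1" and br = g52_br, OF zero3 h1 h5 h2 h3 h4] by blast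
  qed
qed


definition om64 :: "real^6 \<Rightarrow> real^6 \<Rightarrow> real" where
  "om64 u v = u $ 1 * v $ 0 - u $ 0 * v $ 1 + (u $ 2 * v $ 3 - u $ 3 * v $ 2)"

definition ga64 :: "real^6 \<Rightarrow> real^6 \<Rightarrow> real^6 \<Rightarrow> real" where
  "ga64 u v w = u $ 3 * (v $ 5 * w $ 0 - v $ 0 * w $ 5) - v $ 3 * (u $ 5 * w $ 0 - u $ 0 * w $ 5)
     + w $ 3 * (u $ 5 * v $ 0 - u $ 0 * v $ 5)"

lemma adm_g64: "admissible_lie g64_br"
proof (rule adm1[where \<omega> = om64 and \<gamma> = ga64])
  show "\<forall>x. linear (om64 x)"
    by (intro allI linearI) (simp_all add: om64_def algebra_simps)
  show "\<forall>y. linear (\<lambda>x. om64 x y)"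
    by (intro allI linearI) (simp_all add: om64_def algebra_simps)
  show "\<forall>x. om64 x x = 0" by (simp add: om64_def)
  show "ga64 \<in> C3s"
    unfolding C3s_def trilinear_map_def
    by (auto intro!: linearI simp: ga64_def algebra_simps)
  show "\<forall>x y z. - om64 (g64_br x y) z + om64 (g64_br x z) y - om64 (g64_br y z) x = 0"
    by (simp add: om64_def g64_comp algebra_simps)
  show "\<forall>w x y z. d3s g64_br ga64 w x y z = om64 w x * om64 y z - om64 w y * om64 x z + om64 w z * om64 x y"
    by (simp add: d3s_def om64_def ga64_def g64_comp algebra_simps)
  let ?V = "{v::real^6. v $ 1 = 0 \<and> v $ 2 = 0 \<and> v $ 3 = 0 \<and> v $ 4 = 0}"
  have V: "subspace ?V" by (simp add: subspace_def)
  have inV: "\<forall>x y. g64_br x y \<in> ?V" by (simp add: g64_comp)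
  have kill: "\<forall>x. \<forall>v\<in>?V. g64_br x v = 0" by (simp add: g64_comp vec_eq_iff all6)
  have zero3: "\<forall>k\<ge>2. lcs g64_br (Suc k) = {0}" using lcs_zero'[OF V inV kill] by blast
  have Zv: "axis 0 1 = g64_br (axis 1 1) (axis 3 1)"
    by (simp add: g64_comp vec_eq_iff all6 axis_def)
  show "\<forall>k. cond_A g64_br A1 rho0 B1 (\<lambda>x y. om64 x y *\<^sub>R a0) ga64 k"
  proof -
    have h1: "axis 0 1 \<in> lcs g64_br (Suc (Suc 0))" by (subst Zv) (rule lcs_Z)
    have h2: "om64 (axis 3 1) (axis 0 1) *\<^sub>R a0 = 0" by (simp add: om64_def axis_def)
    have h3: "g64_br (axis 3 1) (axis 0 1) = 0" by (simp add: g64_comp vec_eq_iff all6 axis_def)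
    have h4: "\<forall>u. B1 u 0 = 0" by (simp add: B1_def fun_ops)
    have h5: "\<forall>L0\<in>centre g64_br. (\<forall>L. om64 L L0 *\<^sub>R a0 = 0) \<longrightarrow> ga64 (axis 3 1) L0 (axis 0 1) = 0 \<longrightarrow> L0 = 0"
    proof (intro ballI impI)
      fix L0 :: "real^6" assume c: "L0 \<in> centre g64_br" and a: "\<forall>L. om64 L L0 *\<^sub>R a0 = 0"
        and g: "ga64 (axis 3 1) L0 (axis 0 1) = 0"
      have "g64_br (axis 1 1) L0 $ 5 = 0" "g64_br (axis 1 1) L0 $ 0 = 0" "g64_br (axis 3 1) L0 $ 5 = 0"
           "g64_br (axis 3 1) L0 $ 0 = 0"
        using c by (auto simp: centre_def)
      then have "L0 $ 2 = 0" "L0 $ 3 = 0" "L0 $ 4 = 0" "L0 $ 1 = 0" by (simp_all add: g64_comp axis_def)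
      moreover have "om64 (axis 1 1) L0 = 0" using a[rule_format, of "axis 1 1"] by (simp only: sc_a0)
      then have "L0 $ 0 = 0" by (simp add: om64_def axis_def)
      moreover have "L0 $ 5 = 0" using g by (simp add: ga64_def axis_def)
      ultimately show "L0 = 0" by (simp add: vec_eq_iff all6)
    qed
    show ?thesis using condA_two[where \<alpha> = "\<lambda>x y. om64 x y *\<^sub>R a0" and \<gamma> = ga64 and B = B1 and Lt = "axis 3 1" and Zv = "axis 0 1" and br = g64_br, OF zero3 h1 h5 h2 h3 h4] by blast
  qed
qed


definition om1 :: "real^6 \<Rightarrow> real^6 \<Rightarrow> real" where
  "om1 u v = - (u $ 4 * v $ 5 - u $ 5 * v $ 4) + (u $ 1 * v $ 0 - u $ 0 * v $ 1)"
definition om2 :: "real^6 \<Rightarrow> real^6 \<Rightarrow> real" where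
  "om2 u v = (u $ 1 * v $ 5 - u $ 5 * v $ 1) + (u $ 4 * v $ 0 - u $ 0 * v $ 4)"
definition al65 :: "real^6 \<Rightarrow> real^6 \<Rightarrow> nat \<Rightarrow> real" where
  "al65 x y = om1 x y *\<^sub>R a0 + om2 x y *\<^sub>R a1"

lemma al65_0: "al65 x y 0 = om1 x y" and al65_1: "al65 x y 1 = om2 x y" and al65_1': "al65 x y (Suc 0) = om2 x y"
  by (simp_all add: al65_def fun_ops a0_def a1_def)

lemma lin_om1: "linear (om1 x)" "linear (\<lambda>x. om1 x y)"
  by (intro linearI; simp add: om1_def algebra_simps)+
lemma lin_om2: "linear (om2 x)" "linear (\<lambda>x. om2 x y)"
  by (intro linearI; simp add: om2_def algebra_simps)+

lemma adm_g65: "admissible_lie g65_br"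
proof (rule adm_intro[OF om2 ss2, where \<alpha> = al65 and \<gamma> = "\<lambda>_ _ _. 0"])
  have inA: "\<forall>x y. al65 x y \<in> A2"
    by (simp add: al65_def A2_def span_add span_scale span_base)
  then show "\<forall>x y. al65 x y \<in> A2" .
  have la: "linear (al65 x)" for x
    unfolding al65_def by (intro linear_compose_add lin_sc lin_om1 lin_om2)
  have lb: "linear (\<lambda>x. al65 x y)" for y
    unfolding al65_def by (intro linear_compose_add lin_sc lin_om1 lin_om2)
  have alt: "al65 x x = 0" for x by (simp add: al65_def om1_def om2_def)
  have C2: "al65 \<in> C2 A2"
    unfolding C2_def bilinear_map_def using inA la lb alt by blast
  have cl1: "- om1 (g65_br x y) z + om1 (g65_br x z) y - om1 (g65_br y z) x = 0" for x y z
    by (simp add: om1_def g65_comp algebra_simps)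
  have cl2: "- om2 (g65_br x y) z + om2 (g65_br x z) y - om2 (g65_br y z) x = 0" for x y z
    by (simp add: om2_def g65_comp algebra_simps)
  have d2: "d2 g65_br rho0 al65 x y z = 0" for x y z
  proof -
    have "d2 g65_br rho0 al65 x y z = (- om1 (g65_br x y) z + om1 (g65_br x z) y - om1 (g65_br y z) x) *\<^sub>R a0
       + (- om2 (g65_br x y) z + om2 (g65_br x z) y - om2 (g65_br y z) x) *\<^sub>R a1"
      by (simp add: d2_def rho0_def al65_def fun_eq_iff fun_ops algebra_simps)
    then show ?thesis using cl1 cl2 by simp
  qed
  have wid: "om1 w x * om1 y z - om1 w y * om1 x z + om1 w z * om1 x y
     = om2 w x * om2 y z - om2 w y * om2 x z + om2 w z * om2 x y" for w x y z
    by (simp add: om1_def om2_def algebra_simps)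
  have d3: "d3s g65_br (\<lambda>_ _ _. 0) w x y z = (1/2) * wedge22 B2 al65 al65 w x y z" for w x y z
    using wid[of w x y z] by (simp add: d3s_def wedge22_def B2_def al65_0 al65_1 al65_1' algebra_simps)
  show "(al65, \<lambda>_ _ _. 0) \<in> Z2Q g65_br A2 rho0 B2"
    using C2 d2 d3 by (simp add: Z2Q_def C3s_def trilinear_map_def linear_zero)
  show "\<forall>u. B2 u 0 = 0" by (simp add: B2_def fun_ops)
  let ?V = "{v::real^6. v $ 1 = 0 \<and> v $ 2 = 0 \<and> v $ 3 = 0 \<and> v $ 4 = 0}"
  have V: "subspace ?V" by (simp add: subspace_def)
  have inV: "\<forall>x y. g65_br x y \<in> ?V" by (simp add: g65_comp)
  have kill: "\<forall>x. \<forall>v\<in>?V. g65_br x v = 0" by (simp add: g65_comp vec_eq_iff all6)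
  have zero3: "\<forall>k\<ge>2. lcs g65_br (Suc k) = {0}" using lcs_zero'[OF V inV kill] by blast
  have Zv: "axis 0 1 = g65_br (axis 1 1) (axis 3 1)"
    by (simp add: g65_comp vec_eq_iff all6 axis_def)
  have cA: "cond_A g65_br A2 rho0 B2 al65 (\<lambda>_ _ _. 0) k" for k
  proof (intro condA_triv ballI impI)
    fix L0 :: "real^6" assume c: "L0 \<in> centre g65_br" and a: "\<forall>L. al65 L L0 = 0"
    have "g65_br (axis 1 1) L0 $ 5 = 0" "g65_br (axis 1 1) L0 $ 0 = 0" "g65_br (axis 2 1) L0 $ 5 = 0"
         "g65_br (axis 2 1) L0 $ 0 = 0"
      using c by (auto simp: centre_def)
    then have "L0 $ 2 = 0" "L0 $ 3 = 0" "L0 $ 1 = 0" "L0 $ 4 = 0" by (simp_all add: g65_comp axis_def)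
    moreover have "al65 (axis 1 1) L0 0 = 0" "al65 (axis 1 1) L0 1 = 0" using a by simp_all
    then have "L0 $ 0 = 0" "L0 $ 5 = 0" by (simp_all add: al65_0 al65_1 al65_1' om1_def om2_def axis_def)
    ultimately show "L0 = 0" by (simp add: vec_eq_iff all6)
  qed
  have cB: "cond_B g65_br B2 al65 k" for k
    unfolding cond_B_def nondegenerate_sub_def
  proof (intro ballI impI)
    fix u assume u: "u \<in> alpha_ker_image g65_br al65 k"
      and o: "\<forall>v\<in>alpha_ker_image g65_br al65 k. B2 u v = 0"
    show "u = 0"
    proof (cases "k \<ge> 2")
      case True
      then have l0: "lcs g65_br (Suc k) = {0}" using zero3 by blast
      have a0: "al65 x 0 = 0" for x by (simp add: al65_def om1_def om2_def)
      from u obtain N :: nat and x y :: "nat \<Rightarrow> real^6" where "u = (\<Sum>i<N. al65 (x i) (y i))" "\<forall>i<N. y i \<in> lcs g65_br (Suc k)"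
        unfolding alpha_ker_image_def by blast
      then show ?thesis using l0 a0 by simp
    next
      case False
      then have "k = 0 \<or> k = 1" by auto
      then have Zk: "axis 0 1 \<in> lcs g65_br (Suc k)" using lcs_Z[of g65_br] Zv by auto
      have mem: "al65 L (axis 0 1) \<in> alpha_ker_image g65_br al65 k" for L
        unfolding alpha_ker_image_def
        apply (rule CollectI, rule exI[of _ 1], rule exI[of _ "\<lambda>_. L"], rule exI[of _ "\<lambda>_. axis 0 1"])
        using Zk by (simp add: g65_comp vec_eq_iff all6 axis_def)
      have "B2 u (al65 (axis 1 1) (axis 0 1)) = 0" "B2 u (al65 (axis 4 1) (axis 0 1)) = 0"
        using o mem by blast+
      then have "u 0 = 0" "u 1 = 0"
        by (simp_all add: B2_def al65_0 al65_1 al65_1' om1_def om2_def axis_def)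
      moreover have "u \<in> A2" using u aki_sub[OF subA2 inA] by blast
      ultimately show ?thesis using A2_eqI[of u 0] by (simp add: subspace_0[OF subA2])
    qed
  qed
  show "\<forall>k. cond_A g65_br A2 rho0 B2 al65 (\<lambda>_ _ _. 0) k \<and> cond_B g65_br B2 al65 k"
    using cA cB by blast
qed


theorem proposition1:
  shows "admissible_lie h1_br \<and> admissible_lie g41_br \<and> admissible_lie g52_br
       \<and> admissible_lie g64_br \<and> admissible_lie g65_br"
  using adm_h1 adm_g41 adm_g52 adm_g64 adm_g65 by blast

end
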